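(* Let $Z_n,n\ge1$ be positive random variables with distribution functions $H_n$ such that for all large $z$, $$1-H_n(z)=\exp(-\vartheta_nz^q),$$ where $q>0$ and the constants $\vartheta_n$ satisfy $\vartheta_n\in[a,b]$ for all $n\ge1$, with $0<a<b<\infty$. Let $S$ be a non-negative random variable with distribution function with upper endpoint $1$ whose survival function is regularly varying at $1$ with index $\gamma\ge0$, with $Z_n$ independent of $S$ for each $n$. If $u_n,n\ge1$ are positive constants with $\lim_{n\to\infty}u_n=\infty$, then $$P(SZ_n>u_n)\sim\Gamma(\gamma+1)\exp(-\vartheta_nu_n^q)\,P\left(S>1-\frac{1}{q\vartheta_nu_n^q}\right),\qquad n\to\infty.$$
   Context: A non-negative random variable $V$ has a survival function regularly varying at $1$ with index $\gamma\ge0$ if $\lim_{u\to\infty}\frac{P(V>1-t/u)}{P(V>1-1/u)}=t^\gamma$ for all $t>0$. $x_n\sim y_n$ means $x_n/y_n\to1$. *)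

theory Defs
  imports "HOL-Probability.Probability" "HOL-Library.Landau_Symbols"
begin

definition surv_regvar_at_1 :: "'a measure \<Rightarrow> ('a \<Rightarrow> real) \<Rightarrow> real \<Rightarrow> bool" where
  "surv_regvar_at_1 M V \<gamma> \<longleftrightarrow>
     (\<forall>t>0. ((\<lambda>u. measure M {\<omega> \<in> space M. V \<omega> > 1 - t / u} /
                  measure M {\<omega> \<in> space M. V \<omega> > 1 - 1 / u}) \<longlongrightarrow> t powr \<gamma>) at_top)"

end

theory Submission
  imports Defs
begin

lemma potter:
  fixes G :: "real \<Rightarrow> real" and \<gamma> :: real
  assumes mono: "mono G" and G_le1: "\<And>x. G x \<le> 1" and G_pos: "\<And>x. x > 0 \<Longrightarrow> G x > 0"
    and gam: "\<gamma> \<ge> 0"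
    and lim2: "((\<lambda>u. G (2/u) / G (1/u)) \<longlongrightarrow> 2 powr \<gamma>) at_top"
  shows "\<exists>x0>0. \<exists>C>0. \<forall>x. 0 < x \<longrightarrow> x \<le> x0 \<longrightarrow> (\<forall>t>0. G (t*x) \<le> C * (1 + t powr (\<gamma>+1)) * G x)"
proof -
  define K where "K = (2::real) powr (\<gamma>+1)"
  have K2: "K \<ge> 2"
  proof -
    have "K = 2 * 2 powr \<gamma>" by (simp add: K_def powr_add)
    moreover have "2 powr \<gamma> \<ge> 1" using gam by (simp add: ge_one_powr_ge_zero)
    ultimately show ?thesis by simp
  qed
  have "2 powr \<gamma> < K" unfolding K_def by (simp add: powr_less_mono)
  hence "eventually (\<lambda>u. G (2/u) / G (1/u) < K) at_top"
    using lim2 order_tendstoD(2) by blast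
  then obtain U where U: "\<And>u. u \<ge> U \<Longrightarrow> G (2/u) / G (1/u) < K"
    by (auto simp: eventually_at_top_linorder)
  define U' where "U' = max U 1"
  define x0 where "x0 = 1 / U'"
  have x0pos: "x0 > 0" and x0le: "x0 \<le> 1" unfolding x0_def U'_def by auto
  have dbl: "G (2*x) \<le> K * G x" if "0 < x" "x \<le> x0" for x
  proof -
    have U'pos: "U' > 0" unfolding U'_def by simp
    have "x * U' \<le> 1" using that(2) U'pos by (simp add: x0_def le_divide_eq mult.commute)
    hence "1/x \<ge> U'" using that(1) by (simp add: le_divide_eq mult.commute)
    hence "G (2/(1/x)) / G (1/(1/x)) < K" using U unfolding U'_def by force
    hence "G (2*x) / G x < K" by simp
    thus ?thesis using G_pos[OF that(1)] by (simp add: divide_less_eq)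
  qed
  define c0 where "c0 = G x0"
  have c0pos: "c0 > 0" and c0le: "c0 \<le> 1" unfolding c0_def using G_pos x0pos G_le1 by auto
  have Q: "\<forall>x y. 0 < x \<longrightarrow> x \<le> x0 \<longrightarrow> y \<le> 2^k * x \<longrightarrow> G y \<le> K^k * G x / c0" for k :: nat
  proof (induction k)
    case 0
    show ?case
    proof (intro allI impI)
      fix x y assume "0 < x" "x \<le> x0" "y \<le> 2^0 * x"
      hence "G y \<le> G x" using mono by (simp add: monoD)
      also have "\<dots> \<le> G x / c0" using c0pos c0le G_pos[OF \<open>0<x\<close>]
        by (simp add: le_divide_eq)
      finally show "G y \<le> K^0 * G x / c0" by simp
    qed
  next
    case (Suc k)
    show ?case
    proof (intro allI impI)
      fix x y assume x: "0 < x" "x \<le> x0" and y: "y \<le> 2^Suc k * x"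
      show "G y \<le> K^Suc k * G x / c0"
      proof (cases "2*x \<le> x0")
        case True
        have "y \<le> 2^k * (2*x)" using y by simp
        hence "G y \<le> K^k * G (2*x) / c0" using Suc.IH True x by auto
        also have "\<dots> \<le> K^k * (K * G x) / c0"
          using dbl[OF x] c0pos K2 by (intro divide_right_mono mult_left_mono) auto
        finally show ?thesis by (simp add: ac_simps)
      next
        case False
        have "G (2*(x0/2)) \<le> K * G (x0/2)" using dbl[of "x0/2"] x0pos by auto
        hence "c0 \<le> K * G (x0/2)" unfolding c0_def by simp
        also have "G (x0/2) \<le> G x" using False mono by (simp add: monoD)
        hence "K * G (x0/2) \<le> K * G x" using K2 by simp
        finally have c0K: "c0 \<le> K * G x" .
        have "G y \<le> 1" by (rule G_le1)
        also have "1 \<le> K^k" using K2 by (simp add: one_le_power)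
        also have "K^k = K^k * c0 / c0" using c0pos by simp
        also have "\<dots> \<le> K^k * (K * G x) / c0" using c0K c0pos K2
          by (intro divide_right_mono mult_left_mono) auto
        finally show ?thesis by (simp add: ac_simps)
      qed
    qed
  qed
  define C where "C = K / c0"
  have Cpos: "C > 0" unfolding C_def using K2 c0pos by auto
  have main: "G (t*x) \<le> C * (1 + t powr (\<gamma>+1)) * G x" if x: "0 < x" "x \<le> x0" "0 < t" for x t :: real
  proof -
    have Gx: "G x > 0" using G_pos x by auto
    have tp: "0 \<le> t powr (\<gamma>+1)" by simp
    show "G (t*x) \<le> C * (1 + t powr (\<gamma>+1)) * G x"
    proof (cases "t \<le> 1")
      case True
      hence "G (t*x) \<le> G x" using mono x by (intro monoD[OF mono]) (simp add: mult_le_cancel_right1)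
      also have "\<dots> \<le> C * (1 + t powr (\<gamma>+1)) * G x"
      proof -
        have "1 \<le> C" unfolding C_def using K2 c0pos c0le by (simp add: le_divide_eq)
        moreover have "C * 1 \<le> C * (1 + t powr (\<gamma>+1))" using tp Cpos by (intro mult_left_mono) auto
        ultimately have "1 \<le> C * (1 + t powr (\<gamma>+1))" using mult_left_mono[of 1 "1 + t powr (\<gamma>+1)" C] tp Cpos by linarith
        thus ?thesis using Gx by (simp add: mult_le_cancel_right1)
      qed
      finally show ?thesis .
    next
      case False
      define k where "k = nat \<lceil>log 2 t\<rceil>"
      have lg: "log 2 t \<ge> 0" using False by simp
      have "log 2 t \<le> real k" unfolding k_def using lg by linarith
      hence "2 powr (log 2 t) \<le> 2 powr (real k)" by (intro powr_mono) auto
      hence "t \<le> 2 powr (real k)" using x(3) by simp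
      hence tk: "t \<le> 2^k" by (simp add: powr_realpow)
      have "real k < log 2 t + 1" unfolding k_def using lg by linarith
      hence "2 powr real k \<le> 2 powr (log 2 t + 1)" by (intro powr_mono) auto
      also have "\<dots> = 2 * t" using x(3) by (simp add: powr_add)
      finally have k2: "(2::real)^k \<le> 2*t" by (simp add: powr_realpow)
      have "G (t*x) \<le> K^k * G x / c0" using Q[of k] x tk by (auto intro: mult_right_mono)
      also have "K^k = (2^k) powr (\<gamma>+1)" unfolding K_def
        by (simp add: powr_realpow[symmetric] powr_powr mult.commute)
      also have "\<dots> \<le> (2*t) powr (\<gamma>+1)" using k2 gam by (intro powr_mono2) auto
      also have "\<dots> = K * t powr (\<gamma>+1)" unfolding K_def using x(3) by (simp add: powr_mult)
      finally have "G (t*x) \<le> K * t powr (\<gamma>+1) * G x / c0" using Gx c0pos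
        by (simp add: divide_right_mono mult_right_mono)
      also have "\<dots> = C * t powr (\<gamma>+1) * G x" unfolding C_def by simp
      also have "\<dots> \<le> C * (1 + t powr (\<gamma>+1)) * G x" using Cpos Gx
        by (intro mult_right_mono mult_left_mono) auto
      finally show ?thesis .
    qed
  qed
  show ?thesis using x0pos Cpos main by blast
qed

lemma gamma_bochner:
  assumes "s > (0::real)"
  shows "has_bochner_integral lborel (\<lambda>t. indicator {0<..} t * exp (-t) * t powr (s-1)) (Gamma s)"
proof -
  have "has_bochner_integral lborel (\<lambda>t. indicator {0..} t * t powr (s - 1) / exp t) (Gamma s)"
    by (rule has_bochner_integral_nn_integral)
       (use Gamma_conv_nn_integral_real[OF assms] assms Gamma_real_pos in \<open>auto simp: less_imp_le\<close>)
  moreover have "(\<lambda>t. indicator {0..} t * t powr (s - 1) / exp t) =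
                 (\<lambda>t. indicator {0<..} t * exp (-t) * t powr (s-1))"
    by (rule ext) (auto simp: indicator_def exp_minus field_simps)
  ultimately show ?thesis by simp
qed

lemma integrable_exp_ind: "integrable lborel (\<lambda>t::real. indicator {0<..} t * exp (-t))"
proof -
  have "has_bochner_integral lborel (\<lambda>t::real. indicator {0<..} t * exp (-t) * t powr (1-1)) (Gamma 1)"
    by (rule gamma_bochner) simp
  hence "integrable lborel (\<lambda>t::real. indicator {0<..} t * exp (-t) * t powr (1-1))"
    by (simp add: has_bochner_integral_iff)
  moreover have "(\<lambda>t::real. indicator {0<..} t * exp (-t) * t powr (1-1)) = (\<lambda>t. indicator {0<..} t * exp (-t))"
    by (rule ext) (auto simp: indicator_def)
  ultimately show ?thesis by simp
qed

lemma integrable_exp_powr: "p \<ge> 0 \<Longrightarrow> integrable lborel (\<lambda>t::real. indicator {0<..} t * exp (-t) * t powr p)"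
  using gamma_bochner[of "p+1"] by (simp add: has_bochner_integral_iff)

lemma abelian:
  fixes G :: "real \<Rightarrow> real" and \<gamma> :: real and lam :: "nat \<Rightarrow> real" and ch :: "nat \<Rightarrow> real \<Rightarrow> real"
  assumes mono: "mono G" and G_le1: "\<And>x. G x \<le> 1" and G_pos: "\<And>x. x > 0 \<Longrightarrow> G x > 0"
    and gam: "\<gamma> \<ge> 0"
    and regvar: "\<And>t. t > 0 \<Longrightarrow> ((\<lambda>u. G (t/u) / G (1/u)) \<longlongrightarrow> t powr \<gamma>) at_top"
    and lam: "filterlim lam at_top sequentially"
    and chi_meas: "\<And>n. ch n \<in> borel_measurable borel"
    and chi_bd: "\<And>n t. 0 \<le> ch n t \<and> ch n t \<le> 1"
    and chi_lim: "\<And>t. t > 0 \<Longrightarrow> (\<lambda>n. ch n t) \<longlonglongrightarrow> 1"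
  shows "(\<lambda>n. (\<integral>t. indicator {0<..} t * exp (-t) * ch n t * G (t / lam n) \<partial>lborel) / G (1 / lam n))
           \<longlonglongrightarrow> Gamma (\<gamma>+1)"
proof -
  obtain x0 C where x0: "x0 > 0" and C: "C > 0"
    and pot: "\<And>x t. 0 < x \<Longrightarrow> x \<le> x0 \<Longrightarrow> t > 0 \<Longrightarrow> G (t*x) \<le> C * (1 + t powr (\<gamma>+1)) * G x"
  proof -
    have r2: "((\<lambda>u. G (2/u) / G (1/u)) \<longlongrightarrow> 2 powr \<gamma>) at_top" using regvar[of 2] by simp
    show ?thesis using potter[OF mono G_le1 G_pos gam r2] that by blast
  qed
  have Gmeas[measurable]: "G \<in> borel_measurable borel" by (rule borel_measurable_mono[OF mono])
  have "eventually (\<lambda>n. lam n \<ge> max 1 (1/x0)) sequentially"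
    using lam by (simp add: filterlim_at_top del: max.bounded_iff)
  then obtain N where N: "\<And>n. n \<ge> N \<Longrightarrow> lam n \<ge> max 1 (1/x0)"
    by (auto simp: eventually_sequentially)
  have lampos: "lam n > 0" and laminv: "1 / lam n \<le> x0" if "n \<ge> N" for n
  proof -
    show "lam n > 0" using N[OF that] by linarith
    have "1/x0 \<le> lam n" using N[OF that] by linarith
    thus "1 / lam n \<le> x0" using x0 \<open>lam n > 0\<close> by (simp add: divide_le_eq mult.commute)
  qed
  define s where "s n t = indicator {0<..} t * exp (-t) * ch n t * (G (t / lam n) / G (1 / lam n))" for n t
  define f where "f t = indicator {0<..} t * exp (-t) * t powr \<gamma>" for t :: real
  define w where "w t = C * (indicator {0<..} t * exp (-t)) + C * (indicator {0<..} t * exp (-t) * t powr (\<gamma>+1))" for t :: real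
  have eq: "(\<integral>t. indicator {0<..} t * exp (-t) * ch n t * G (t / lam n) \<partial>lborel) / G (1 / lam n)
            = integral\<^sup>L lborel (s n)" for n
  proof -
    have e1: "s n = (\<lambda>t. (indicator {0<..} t * exp (-t) * ch n t * G (t / lam n)) / G (1 / lam n))"
      by (rule ext) (simp add: s_def)
    show ?thesis by (simp only: e1 integral_divide_zero)
  qed
  have "(\<lambda>n. integral\<^sup>L lborel (s (n + N))) \<longlonglongrightarrow> integral\<^sup>L lborel f"
  proof (rule integral_dominated_convergence[where w = w])
    show "f \<in> borel_measurable lborel" unfolding f_def by measurable
    show "s (n+N) \<in> borel_measurable lborel" for n
      unfolding s_def using chi_meas[of "n+N"] by measurable
    show "integrable lborel w" unfolding w_def
      using integrable_exp_ind integrable_exp_powr[of "\<gamma>+1"] gam by simp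
    show "AE t in lborel. (\<lambda>n. s (n + N) t) \<longlonglongrightarrow> f t"
    proof (rule AE_I2)
      fix t :: real
      show "(\<lambda>n. s (n + N) t) \<longlonglongrightarrow> f t"
      proof (cases "t > 0")
        case True
        have lamN: "filterlim (\<lambda>n. lam (n+N)) at_top sequentially"
          by (rule filterlim_compose[OF lam filterlim_add_const_nat_at_top])
        have r: "(\<lambda>n. G (t / lam (n+N)) / G (1 / lam (n+N))) \<longlonglongrightarrow> t powr \<gamma>"
          by (rule filterlim_compose[OF regvar[OF True] lamN])
        have c: "(\<lambda>n. ch (n+N) t) \<longlonglongrightarrow> 1"
          using chi_lim[OF True] by (rule LIMSEQ_ignore_initial_segment)
        have "(\<lambda>n. indicator {0<..} t * exp (-t) * ch (n+N) t * (G (t / lam (n+N)) / G (1 / lam (n+N))))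
               \<longlonglongrightarrow> indicator {0<..} t * exp (-t) * 1 * t powr \<gamma>"
          by (intro tendsto_intros c r)
        thus ?thesis unfolding s_def f_def by simp
      next
        case False
        thus ?thesis unfolding s_def f_def by simp
      qed
    qed
    show "AE t in lborel. norm (s (n + N) t) \<le> w t" for n
    proof (rule AE_I2)
      fix t :: real
      have nN: "n + N \<ge> N" by simp
      show "norm (s (n + N) t) \<le> w t"
      proof (cases "t > 0")
        case True
        have Gp: "G (1 / lam (n+N)) > 0" using G_pos lampos[OF nN] by simp
        have Gt: "G (t / lam (n+N)) \<ge> 0" using G_pos[of "t / lam (n+N)"] True lampos[OF nN] by simp
        have rb: "G (t / lam (n+N)) / G (1 / lam (n+N)) \<le> C * (1 + t powr (\<gamma>+1))"
          using pot[of "1 / lam (n+N)" t] lampos[OF nN] laminv[OF nN] True Gp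
          by (simp add: divide_le_eq)
        have "norm (s (n + N) t) = exp (-t) * ch (n+N) t * (G (t / lam (n+N)) / G (1 / lam (n+N)))"
          unfolding s_def using True chi_bd[of "n+N" t] Gp Gt by simp
        also have "\<dots> \<le> exp (-t) * 1 * (C * (1 + t powr (\<gamma>+1)))"
          using chi_bd[of "n+N" t] rb Gp Gt
          by (intro mult_mono) auto
        also have "\<dots> = w t" unfolding w_def using True by (simp add: algebra_simps)
        finally show ?thesis .
      next
        case False
        thus ?thesis unfolding s_def w_def by simp
      qed
    qed
  qed
  moreover have "integral\<^sup>L lborel f = Gamma (\<gamma>+1)"
    using gamma_bochner[of "\<gamma>+1"] gam unfolding f_def by (simp add: has_bochner_integral_iff)
  ultimately have "(\<lambda>n. integral\<^sup>L lborel (s (n + N))) \<longlonglongrightarrow> Gamma (\<gamma>+1)" by simp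
  hence "(\<lambda>n. integral\<^sup>L lborel (s n)) \<longlonglongrightarrow> Gamma (\<gamma>+1)" by (rule LIMSEQ_offset)
  thus ?thesis unfolding eq .
qed

lemma (in prob_space) laplace_repr:
  fixes W :: "'a \<Rightarrow> real" and lam :: real and A :: "'a set"
  assumes Wm[measurable]: "W \<in> borel_measurable M" and W0: "AE \<omega> in M. W \<omega> \<ge> 0"
    and lam: "lam > 0" and A[measurable]: "A \<in> sets M"
  shows "(\<integral>\<omega>. exp (- lam * W \<omega>) * indicator A \<omega> \<partial>M) =
         (\<integral>t. indicator {0<..} t * exp (-t) * measure M {\<omega>\<in>space M. lam * W \<omega> < t \<and> \<omega> \<in> A} \<partial>lborel)"
proof -
  define F where "F \<omega> t = (if 0 < t \<and> lam * W \<omega> < t \<and> \<omega> \<in> A then exp (-t) else 0)" for \<omega> t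
  have expint: "(\<integral>\<^sup>+t. ennreal (indicator {0<..} t * indicator {c<..} t * exp (-t)) \<partial>lborel) = ennreal (exp (-c))"
    if "c \<ge> 0" for c :: real
  proof -
    have "(\<integral>\<^sup>+t. ennreal (indicator {c..} t * exp (-1*t)) \<partial>lborel) = ennreal (exp (-1*c)/1)"
      by (rule nn_integral_has_integral_lebesgue) (use has_integral_exp_minus_to_infinity[of 1 c] in auto)
    moreover have "(\<integral>\<^sup>+t. ennreal (indicator {0<..} t * indicator {c<..} t * exp (-t)) \<partial>lborel)
        = (\<integral>\<^sup>+t. ennreal (indicator {c..} t * exp (-1*t)) \<partial>lborel)"
    proof -
      have "AE t in lborel. t \<noteq> c" by (rule AE_lborel_singleton)
      then show ?thesis
        by (rule nn_integral_cong_AE[OF eventually_mono]) (use that in \<open>auto simp: indicator_def\<close>)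
    qed
    ultimately show ?thesis by simp
  qed
  have step2: "(\<integral>\<^sup>+\<omega>. ennreal (exp (- lam * W \<omega>) * indicator A \<omega>) \<partial>M)
      = (\<integral>\<^sup>+\<omega>. (\<integral>\<^sup>+t. ennreal (F \<omega> t) \<partial>lborel) \<partial>M)"
  proof (rule nn_integral_cong_AE[OF eventually_mono[OF W0]])
    fix \<omega> assume w: "W \<omega> \<ge> 0"
    show "ennreal (exp (- lam * W \<omega>) * indicator A \<omega>) = (\<integral>\<^sup>+t. ennreal (F \<omega> t) \<partial>lborel)"
    proof (cases "\<omega> \<in> A")
      case True
      have "(\<lambda>t. ennreal (F \<omega> t)) = (\<lambda>t. ennreal (indicator {0<..} t * indicator {lam * W \<omega><..} t * exp (-t)))"
        by (rule ext) (simp add: F_def indicator_def True)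
      moreover have "lam * W \<omega> \<ge> 0" using lam w by simp
      ultimately show ?thesis using expint[of "lam * W \<omega>"] True by simp
    next
      case False
      thus ?thesis by (simp add: F_def)
    qed
  qed
  interpret pf: pair_sigma_finite M lborel
    by (intro pair_sigma_finite.intro sigma_finite_lborel) (simp add: sigma_finite_measure_axioms)
  have Fm: "(\<lambda>(\<omega>, t). ennreal (F \<omega> t)) \<in> borel_measurable (M \<Otimes>\<^sub>M lborel)"
    unfolding F_def by measurable
  have step3: "(\<integral>\<^sup>+\<omega>. (\<integral>\<^sup>+t. ennreal (F \<omega> t) \<partial>lborel) \<partial>M)
      = (\<integral>\<^sup>+t. (\<integral>\<^sup>+\<omega>. ennreal (F \<omega> t) \<partial>M) \<partial>lborel)"
    using pf.Fubini'[OF Fm] by simp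
  define g where "g t = indicator {0<..} t * exp (-t) * measure M {\<omega>\<in>space M. lam * W \<omega> < t \<and> \<omega> \<in> A}" for t
  have step4: "(\<integral>\<^sup>+\<omega>. ennreal (F \<omega> t) \<partial>M) = ennreal (g t)" for t
  proof -
    define B where "B = {\<omega>\<in>space M. lam * W \<omega> < t \<and> \<omega> \<in> A}"
    have Bm: "B \<in> sets M" unfolding B_def by measurable
    have "(\<integral>\<^sup>+\<omega>. ennreal (F \<omega> t) \<partial>M) = (\<integral>\<^sup>+\<omega>. ennreal (indicator {0<..} t * exp (-t)) * indicator B \<omega> \<partial>M)"
      by (rule nn_integral_cong) (auto simp: F_def B_def indicator_def)
    also have "\<dots> = ennreal (indicator {0<..} t * exp (-t)) * emeasure M B"
      by (rule nn_integral_cmult_indicator[OF Bm])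
    also have "\<dots> = ennreal (g t)"
      by (simp add: g_def B_def emeasure_eq_measure ennreal_mult)
    finally show ?thesis .
  qed
  have gmono: "mono (\<lambda>t. measure M {\<omega>\<in>space M. lam * W \<omega> < t \<and> \<omega> \<in> A})"
    by (rule monoI, rule finite_measure_mono) auto
  have gm[measurable]: "(\<lambda>t. measure M {\<omega>\<in>space M. lam * W \<omega> < t \<and> \<omega> \<in> A}) \<in> borel_measurable borel"
    by (rule borel_measurable_mono[OF gmono])
  have gint: "integrable lborel g"
  proof (rule Bochner_Integration.integrable_bound[OF integrable_exp_ind])
    show "g \<in> borel_measurable lborel" unfolding g_def by measurable
    show "AE t in lborel. norm (g t) \<le> norm (indicator {0<..} t * exp (- t))"
      by (rule AE_I2) (auto simp: g_def indicator_def abs_mult)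
  qed
  have g0: "g t \<ge> 0" for t unfolding g_def by auto
  have lint: "integrable M (\<lambda>\<omega>. exp (- lam * W \<omega>) * indicator A \<omega>)"
    by (rule integrable_const_bound[where B=1]) (use W0 lam in \<open>auto simp: indicator_def elim!: eventually_mono\<close>)
  have "ennreal (\<integral>\<omega>. exp (- lam * W \<omega>) * indicator A \<omega> \<partial>M)
        = (\<integral>\<^sup>+\<omega>. ennreal (exp (- lam * W \<omega>) * indicator A \<omega>) \<partial>M)"
    by (rule nn_integral_eq_integral[symmetric, OF lint]) auto
  also have "\<dots> = (\<integral>\<^sup>+t. ennreal (g t) \<partial>lborel)" using step2 step3 step4 by simp
  also have "\<dots> = ennreal (integral\<^sup>L lborel g)"
    by (rule nn_integral_eq_integral[OF gint]) (simp add: g0)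
  finally have "ennreal (\<integral>\<omega>. exp (- lam * W \<omega>) * indicator A \<omega> \<partial>M) = ennreal (integral\<^sup>L lborel g)" .
  moreover have "(\<integral>\<omega>. exp (- lam * W \<omega>) * indicator A \<omega> \<partial>M) \<ge> 0"
    by (rule integral_nonneg_AE) auto
  moreover have "integral\<^sup>L lborel g \<ge> 0" by (rule integral_nonneg_AE) (simp add: g0)
  ultimately show ?thesis unfolding g_def by simp
qed

lemma prod_tail:
  fixes M :: "'a measure" and S Z :: "'a \<Rightarrow> real" and u z0 th q :: real
  assumes P: "prob_space M" and Sm[measurable]: "S \<in> borel_measurable M" and Zm[measurable]: "Z \<in> borel_measurable M"
    and ind: "prob_space.indep_var M borel S borel Z"
    and S01: "AE \<omega> in M. 0 \<le> S \<omega> \<and> S \<omega> \<le> 1"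
    and th: "th \<ge> 0" and u: "u > 0" and uz: "u \<ge> z0"
    and tail: "\<forall>z\<ge>z0. 1 - measure M {\<omega>\<in>space M. Z \<omega> \<le> z} = exp (- th * z powr q)"
  shows "measure M {\<omega>\<in>space M. S \<omega> * Z \<omega> > u}
       = (\<integral>\<omega>. (if S \<omega> > 0 then exp (- th * (u / S \<omega>) powr q) else 0) \<partial>M)"
proof -
  interpret prob_space M by (rule P)
  define f where "f s = (if s > 0 then exp (- th * (u / s) powr q) else 0)" for s :: real
  have fm[measurable]: "f \<in> borel_measurable borel" unfolding f_def by measurable
  define PS where "PS = distr M borel S"
  define PZ where "PZ = distr M borel Z"
  have prodeq: "PS \<Otimes>\<^sub>M PZ = distr M (borel \<Otimes>\<^sub>M borel) (\<lambda>\<omega>. (S \<omega>, Z \<omega>))"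
    using ind unfolding PS_def PZ_def by (simp add: indep_var_distribution_eq)
  define B where "B = {p \<in> space (borel \<Otimes>\<^sub>M borel :: (real \<times> real) measure). fst p * snd p > u}"
  have Bm: "B \<in> sets (borel \<Otimes>\<^sub>M borel)" unfolding B_def by measurable
  have pm: "(\<lambda>\<omega>. (S \<omega>, Z \<omega>)) \<in> measurable M (borel \<Otimes>\<^sub>M borel)" by measurable
  have E: "{\<omega>\<in>space M. S \<omega> * Z \<omega> > u} = (\<lambda>\<omega>. (S \<omega>, Z \<omega>)) -` B \<inter> space M"
    unfolding B_def by (auto simp: space_pair_measure)
  interpret PZ: prob_space PZ unfolding PZ_def by (rule prob_space_distr) simp
  have sfPZ: "sigma_finite_measure PZ" by (rule prob_space_imp_sigma_finite) unfold_locales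
  have "emeasure M {\<omega>\<in>space M. S \<omega> * Z \<omega> > u} = emeasure (PS \<Otimes>\<^sub>M PZ) B"
    unfolding E prodeq by (rule emeasure_distr[OF pm Bm, symmetric])
  also have "\<dots> = (\<integral>\<^sup>+s. emeasure PZ (Pair s -` B) \<partial>PS)"
    by (rule sigma_finite_measure.emeasure_pair_measure_alt[OF sfPZ]) (simp add: PS_def PZ_def Bm)
  also have "\<dots> = (\<integral>\<^sup>+s. ennreal (f s) \<partial>PS)"
  proof (rule nn_integral_cong_AE)
    have "AE s in PS. 0 \<le> s \<and> s \<le> 1" unfolding PS_def
      by (subst AE_distr_iff) (use S01 in auto)
    then show "AE s in PS. emeasure PZ (Pair s -` B) = ennreal (f s)"
    proof (rule eventually_mono)
      fix s :: real assume s: "0 \<le> s \<and> s \<le> 1"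
      have Bs: "Pair s -` B = {z. s * z > u}" unfolding B_def by (auto simp: space_pair_measure)
      have Bsm: "{z::real. s * z > u} \<in> sets borel" by measurable
      have "emeasure PZ (Pair s -` B) = emeasure M {\<omega>\<in>space M. s * Z \<omega> > u}"
        unfolding Bs PZ_def by (subst emeasure_distr[OF Zm Bsm]) (auto intro!: arg_cong[where f="emeasure M"])
      also have "\<dots> = ennreal (f s)"
      proof (cases "s > 0")
        case False
        hence "s = 0" using s by simp
        thus ?thesis using u by (simp add: f_def)
      next
        case True
        have "u \<le> u / s" using True s u by (simp add: le_divide_eq)
        hence zz: "u / s \<ge> z0" using uz by simp
        have set: "{\<omega>\<in>space M. s * Z \<omega> > u} = space M - {\<omega>\<in>space M. Z \<omega> \<le> u / s}"
          using True by (auto simp: pos_le_divide_eq mult.commute)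
        have "emeasure M {\<omega>\<in>space M. s * Z \<omega> > u} = ennreal (1 - measure M {\<omega>\<in>space M. Z \<omega> \<le> u / s})"
          unfolding set by (subst emeasure_eq_measure, subst prob_compl) (auto)
        also have "\<dots> = ennreal (f s)" using tail zz True by (simp add: f_def)
        finally show ?thesis .
      qed
      finally show "emeasure PZ (Pair s -` B) = ennreal (f s)" .
    qed
  qed
  also have "\<dots> = (\<integral>\<^sup>+\<omega>. ennreal (f (S \<omega>)) \<partial>M)"
    unfolding PS_def by (rule nn_integral_distr) auto
  also have "\<dots> = ennreal (\<integral>\<omega>. f (S \<omega>) \<partial>M)"
  proof (rule nn_integral_eq_integral)
    show "integrable M (\<lambda>\<omega>. f (S \<omega>))"
      by (rule integrable_const_bound[where B=1]) (auto simp: f_def th)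
  qed (auto simp: f_def)
  finally have "ennreal (measure M {\<omega>\<in>space M. S \<omega> * Z \<omega> > u}) = ennreal (\<integral>\<omega>. f (S \<omega>) \<partial>M)"
    by (simp add: emeasure_eq_measure)
  moreover have "(\<integral>\<omega>. f (S \<omega>) \<partial>M) \<ge> 0" by (rule integral_nonneg_AE) (auto simp: f_def)
  ultimately show ?thesis unfolding f_def by simp
qed

lemma my_powr_at_top:
  assumes "(p::real) > 0"
  shows   "filterlim (\<lambda>x. x powr p) at_top at_top"
proof (subst filterlim_cong[OF refl refl])
  show "LIM x at_top. exp (p * ln x) :> at_top"
    by (rule filterlim_compose[OF exp_at_top filterlim_tendsto_pos_mult_at_top[OF tendsto_const]])
       (simp_all add: ln_at_top assms)
  show "eventually (\<lambda>x. x powr p = exp (p * ln x)) at_top"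
    using eventually_gt_at_top[of 0] by eventually_elim (simp add: powr_def)
qed

lemma powr_neg_lower:
  fixes q s :: real
  assumes q: "q > 0" and s: "0 < s" "s \<le> 1"
  shows "1 + q * (1 - s) \<le> s powr (-q)"
proof -
  have "s powr (-q) = exp (q * (- ln s))" using s by (simp add: powr_def)
  moreover have "q * (1 - s) \<le> q * (- ln s)" using ln_le_minus_one[OF s(1)] q by (intro mult_left_mono) auto
  moreover have "1 + q * (- ln s) \<le> exp (q * (- ln s))" by (rule exp_ge_add_one_self)
  ultimately show ?thesis by linarith
qed

lemma powr_neg_upper:
  fixes q s :: real
  assumes q: "q > 0" and s: "0 < s" "s \<le> 1"
  shows "s powr (-q) \<le> 1 + q * (1 - s) * s powr (-(q+1))"
proof -
  define y where "y = q * (- ln s)"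
  have e: "s powr (-q) = exp y" using s by (simp add: powr_def y_def)
  have y0: "y \<ge> 0" using s q unfolding y_def by (intro mult_nonneg_nonneg) auto
  have "1 - y \<le> exp (-y)" using exp_ge_add_one_self[of "-y"] by simp
  hence "(1 - y) * exp y \<le> exp (-y) * exp y" by (rule mult_right_mono) simp
  hence ey: "exp y \<le> 1 + y * exp y" by (simp add: algebra_simps exp_minus_inverse)
  have "ln (1/s) \<le> 1/s - 1" using s by (intro ln_le_minus_one) simp
  hence "- ln s \<le> (1 - s) / s" using s by (simp add: ln_div diff_divide_distrib)
  hence yb: "y \<le> q * ((1 - s) / s)" unfolding y_def using q by (intro mult_left_mono) auto
  have "y * exp y \<le> q * ((1 - s) / s) * exp y" using yb by (rule mult_right_mono) simp
  also have "q * ((1 - s) / s) * exp y = q * (1 - s) * (s powr (-q) / s)" using e by simp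
  also have "s powr (-q) / s = s powr (-(q+1))"
  proof -
    have a: "s powr (-(q+1)) = s powr (-q) * s powr (-1)" using powr_add[of s "-q" "-1"] by simp
    have b: "s powr (-1) = 1/s" using s by (simp add: powr_minus_divide)
    show ?thesis unfolding a b by simp
  qed
  finally show ?thesis using ey e by simp
qed

lemma integrable_exp_ind_bounded:
  fixes h :: "real \<Rightarrow> real"
  assumes hm: "h \<in> borel_measurable borel" and hb: "\<And>t. \<bar>h t\<bar> \<le> 1"
  shows "integrable lborel (\<lambda>t. indicator {0<..} t * exp (-t) * h t)"
proof (rule Bochner_Integration.integrable_bound[OF integrable_exp_ind])
  show "(\<lambda>t. indicator {0<..} t * exp (-t) * h t) \<in> borel_measurable lborel" using hm by measurable
  show "AE t in lborel. norm (indicator {0<..} t * exp (- t) * h t) \<le> norm (indicator {0<..} t * exp (- t))"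
  proof (rule AE_I2)
    fix t :: real
    have "\<bar>h t\<bar> * exp (-t) \<le> 1 * exp (-t)" using hb[of t] by (intro mult_right_mono) auto
    thus "norm (indicator {0<..} t * exp (- t) * h t) \<le> norm (indicator {0<..} t * exp (- t))"
      by (auto simp: indicator_def abs_mult)
  qed
qed

lemma lin_iff:
  fixes L s t :: real
  assumes "L > 0"
  shows "L * (1 - s) < t \<longleftrightarrow> 1 - t / L < s"
proof -
  have "1 - t / L < s \<longleftrightarrow> 1 - s < t / L" by linarith
  also have "\<dots> \<longleftrightarrow> (1 - s) * L < t" by (rule pos_less_divide_eq[OF assms])
  finally show ?thesis by (simp add: mult.commute)
qed

lemma exp_prod_le1:
  fixes K L w :: real
  assumes "0 \<le> K" "0 \<le> L" "0 \<le> w"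
  shows "norm (exp (-K) * (exp (- L * w) * indicator A x)) \<le> 1"
proof -
  have a: "exp (-K) \<le> 1" using assms by simp
  have "0 \<le> L * w" using assms by simp
  hence b: "exp (-L * w) \<le> 1" by simp
  have c: "indicator A x \<le> (1::real)" by (simp add: indicator_def)
  have "exp (-K) * (exp (- L * w) * indicator A x) \<le> 1 * (1 * 1)"
    using a b c by (intro mult_mono) auto
  thus ?thesis by (simp add: abs_mult)
qed

theorem lemma3p2:
  fixes M :: "'a measure" and S :: "'a \<Rightarrow> real" and Z :: "nat \<Rightarrow> 'a \<Rightarrow> real"
    and \<theta> :: "nat \<Rightarrow> real" and u :: "nat \<Rightarrow> real" and q a b \<gamma> :: real
  assumes "prob_space M"
    and S_rv: "S \<in> borel_measurable M"
    and Z_rv: "\<And>n. n \<ge> 1 \<Longrightarrow> Z n \<in> borel_measurable M"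
    and Z_pos: "\<And>n. n \<ge> 1 \<Longrightarrow> AE \<omega> in M. Z n \<omega> > 0"
    and q_pos: "q > 0"
    and ab: "0 < a" "a < b"
    and theta_bds: "\<And>n. n \<ge> 1 \<Longrightarrow> \<theta> n \<in> {a..b}"
    and Z_tail: "\<exists>z0. \<forall>n\<ge>1. \<forall>z\<ge>z0.
                   1 - measure M {\<omega> \<in> space M. Z n \<omega> \<le> z} = exp (- \<theta> n * z powr q)"
    and S_nonneg: "AE \<omega> in M. S \<omega> \<ge> 0"
    and S_endpoint_le: "AE \<omega> in M. S \<omega> \<le> 1"
    and S_endpoint: "\<And>\<epsilon>. \<epsilon> > 0 \<Longrightarrow> measure M {\<omega> \<in> space M. S \<omega> > 1 - \<epsilon>} > 0"
    and gamma_nonneg: "\<gamma> \<ge> 0"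
    and S_regvar: "surv_regvar_at_1 M S \<gamma>"
    and indep: "\<And>n. n \<ge> 1 \<Longrightarrow> prob_space.indep_var M borel S borel (Z n)"
    and u_pos: "\<And>n. n \<ge> 1 \<Longrightarrow> u n > 0"
    and u_lim: "filterlim u at_top sequentially"
  shows "(\<lambda>n. measure M {\<omega> \<in> space M. S \<omega> * Z n \<omega> > u n}) \<sim>[sequentially]
         (\<lambda>n. Gamma (\<gamma> + 1) * exp (- \<theta> n * u n powr q) *
              measure M {\<omega> \<in> space M. S \<omega> > 1 - 1 / (q * \<theta> n * u n powr q)})"
proof -
  interpret prob_space M by fact
  note S_rv[measurable]
  obtain z0 where z0: "\<forall>n\<ge>1. \<forall>z\<ge>z0. 1 - measure M {\<omega> \<in> space M. Z n \<omega> \<le> z} = exp (- \<theta> n * z powr q)"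
    using Z_tail by blast
  define G where "G x = measure M {\<omega>\<in>space M. S \<omega> > 1 - x}" for x
  have Gmono: "mono G" unfolding G_def by (rule monoI, rule finite_measure_mono) auto
  have G_le1: "G x \<le> 1" for x unfolding G_def by (rule prob_le_1)
  have G_pos: "G x > 0" if "x > 0" for x unfolding G_def using S_endpoint that by blast
  have Greg: "((\<lambda>u. G (t/u) / G (1/u)) \<longlongrightarrow> t powr \<gamma>) at_top" if "t > 0" for t
    using S_regvar that unfolding surv_regvar_at_1_def G_def by blast
  have Gm[measurable]: "G \<in> borel_measurable borel" by (rule borel_measurable_mono[OF Gmono])
  have S01: "AE \<omega> in M. 0 \<le> S \<omega> \<and> S \<omega> \<le> 1" by (rule eventually_conj[OF S_nonneg S_endpoint_le])
  have W0: "AE \<omega> in M. 1 - S \<omega> \<ge> 0" using S_endpoint_le by (auto elim: eventually_mono)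
  define v where "v n = \<theta> n * u n powr q" for n
  define P where "P n = measure M {\<omega>\<in>space M. S \<omega> * Z n \<omega> > u n}" for n
  define R where "R n = Gamma (\<gamma>+1) * exp (- v n) * G (1 / (q * v n))" for n
  define fS where "fS n \<omega> = (if S \<omega> > 0 then exp (- \<theta> n * (u n / S \<omega>) powr q) else 0)" for n \<omega>
  have Rform: "(\<lambda>n. Gamma (\<gamma> + 1) * exp (- \<theta> n * u n powr q) *
              measure M {\<omega> \<in> space M. S \<omega> > 1 - 1 / (q * \<theta> n * u n powr q)}) = R"
    by (rule ext) (simp add: R_def v_def G_def mult.assoc)
  have ulim': "filterlim (\<lambda>n. u n powr q) at_top sequentially"
    by (rule filterlim_compose[OF my_powr_at_top[OF q_pos] u_lim])
  have vlim: "filterlim v at_top sequentially"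
  proof (rule filterlim_at_top_mono[OF filterlim_tendsto_pos_mult_at_top[OF tendsto_const[of a] ab(1) ulim']])
    show "eventually (\<lambda>n. a * u n powr q \<le> v n) sequentially"
      using eventually_ge_at_top[of "1::nat"]
    proof eventually_elim
      fix n :: nat assume "n \<ge> 1"
      thus "a * u n powr q \<le> v n" using theta_bds[of n] unfolding v_def by (intro mult_right_mono) auto
    qed
  qed
  have qvlim: "filterlim (\<lambda>n. q * v n) at_top sequentially"
    by (rule filterlim_tendsto_pos_mult_at_top[OF tendsto_const q_pos vlim])
  define good where "good n \<longleftrightarrow> n \<ge> 1 \<and> u n \<ge> z0" for n
  have ev_good: "eventually good sequentially"
  proof -
    have "eventually (\<lambda>n. z0 \<le> u n) sequentially" using u_lim by (simp add: filterlim_at_top)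
    thus ?thesis unfolding good_def by (rule eventually_conj[OF eventually_ge_at_top])
  qed
  have vpos: "v n > 0" if "good n" for n
    using that theta_bds[of n] u_pos[of n] ab unfolding good_def v_def by auto
  have Pn: "P n = (\<integral>\<omega>. fS n \<omega> \<partial>M)" if "good n" for n
  proof -
    have n1: "n \<ge> 1" and uz: "z0 \<le> u n" using that unfolding good_def by auto
    have th: "0 \<le> \<theta> n" using n1 theta_bds[of n] ab by auto
    have tl: "\<forall>z\<ge>z0. 1 - measure M {\<omega>\<in>space M. Z n \<omega> \<le> z} = exp (- \<theta> n * z powr q)"
      using z0 n1 by auto
    show ?thesis unfolding P_def fS_def
      by (rule prod_tail[OF \<open>prob_space M\<close> S_rv Z_rv[OF n1] indep[OF n1] S01 th u_pos[OF n1] uz tl])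
  qed
  have frew: "\<theta> n * (u n / s) powr q = v n * s powr (-q)" if "good n" "s > 0" for n s
  proof -
    have "u n > 0" using that u_pos unfolding good_def by auto
    hence "(u n / s) powr q = u n powr q * s powr (-q)"
      using that by (simp add: powr_divide powr_minus_divide)
    thus ?thesis unfolding v_def by simp
  qed
  have fSm: "fS n \<in> borel_measurable M" for n unfolding fS_def by measurable
  have fSint: "integrable M (fS n)" if "good n" for n
  proof (rule integrable_const_bound[where B=1])
    have "\<theta> n \<ge> 0" using that theta_bds[of n] ab unfolding good_def by auto
    thus "AE x in M. norm (fS n x) \<le> 1" by (auto simp: fS_def)
  qed (rule fSm)
  have mm: "(\<lambda>t. measure M {\<omega>\<in>space M. lam * (1 - S \<omega>) < t \<and> \<omega> \<in> A}) \<in> borel_measurable borel"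
    if Am: "A \<in> sets M" for lam A
  proof (rule borel_measurable_mono)
    show "mono (\<lambda>t. measure M {\<omega>\<in>space M. lam * (1 - S \<omega>) < t \<and> \<omega> \<in> A})"
    proof (rule monoI, rule finite_measure_mono)
      fix x y :: real assume "x \<le> y"
      thus "{\<omega>\<in>space M. lam * (1 - S \<omega>) < x \<and> \<omega> \<in> A} \<subseteq> {\<omega>\<in>space M. lam * (1 - S \<omega>) < y \<and> \<omega> \<in> A}"
        by auto
      show "{\<omega>\<in>space M. lam * (1 - S \<omega>) < y \<and> \<omega> \<in> A} \<in> events" using Am by measurable
    qed
  qed
  define I1 where "I1 n = (\<integral>t. indicator {0<..} t * exp (-t) * G (t / (q * v n)) \<partial>lborel)" for n
  have upper: "P n \<le> exp (- v n) * I1 n" if g: "good n" for n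
  proof -
    have qv: "q * v n > 0" using vpos[OF g] q_pos by simp
    have L: "(\<integral>\<omega>. exp (- (q * v n) * (1 - S \<omega>)) * indicator (space M) \<omega> \<partial>M) =
         (\<integral>t. indicator {0<..} t * exp (-t) * measure M {\<omega>\<in>space M. (q * v n) * (1 - S \<omega>) < t \<and> \<omega> \<in> space M} \<partial>lborel)"
      by (rule laplace_repr[where W="\<lambda>\<omega>. 1 - S \<omega>"]) (use W0 qv in auto)
    also have "\<dots> = I1 n" unfolding I1_def
    proof (rule Bochner_Integration.integral_cong[OF refl])
      fix t :: real
      have "{\<omega>\<in>space M. (q * v n) * (1 - S \<omega>) < t \<and> \<omega> \<in> space M} = {\<omega>\<in>space M. S \<omega> > 1 - t / (q * v n)}"
        by (auto simp: lin_iff[OF qv])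
      thus "indicator {0<..} t * exp (-t) * measure M {\<omega>\<in>space M. (q * v n) * (1 - S \<omega>) < t \<and> \<omega> \<in> space M}
            = indicator {0<..} t * exp (-t) * G (t / (q * v n))" unfolding G_def by simp
    qed
    finally have L': "(\<integral>\<omega>. exp (- (q * v n) * (1 - S \<omega>)) * indicator (space M) \<omega> \<partial>M) = I1 n" .
    have "P n = (\<integral>\<omega>. fS n \<omega> \<partial>M)" by (rule Pn[OF g])
    also have "\<dots> \<le> (\<integral>\<omega>. exp (- v n) * (exp (- (q * v n) * (1 - S \<omega>)) * indicator (space M) \<omega>) \<partial>M)"
    proof (rule integral_mono_AE[OF fSint[OF g]])
      show "integrable M (\<lambda>\<omega>. exp (- v n) * (exp (- (q * v n) * (1 - S \<omega>)) * indicator (space M) \<omega>))"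
        proof (rule integrable_const_bound[where B=1])
          show "AE \<omega> in M. norm (exp (- v n) * (exp (- (q * v n) * (1 - S \<omega>)) * indicator (space M) \<omega>)) \<le> 1"
            using S01 by eventually_elim (rule exp_prod_le1, use vpos[OF g] q_pos in auto)
        qed measurable
      show "AE \<omega> in M. fS n \<omega> \<le> exp (- v n) * (exp (- (q * v n) * (1 - S \<omega>)) * indicator (space M) \<omega>)"
        using S01 AE_space
      proof eventually_elim
        fix \<omega> assume s: "0 \<le> S \<omega> \<and> S \<omega> \<le> 1" and sp: "\<omega> \<in> space M"
        show "fS n \<omega> \<le> exp (- v n) * (exp (- (q * v n) * (1 - S \<omega>)) * indicator (space M) \<omega>)"
        proof (cases "S \<omega> > 0")
          case True
          have "v n * (1 + q * (1 - S \<omega>)) \<le> v n * S \<omega> powr (-q)"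
            using powr_neg_lower[OF q_pos True] s vpos[OF g] by (intro mult_left_mono) auto
          hence "- (v n * S \<omega> powr (-q)) \<le> - v n + - (q * v n) * (1 - S \<omega>)"
            by (simp add: algebra_simps)
          hence "exp (- (v n * S \<omega> powr (-q))) \<le> exp (- v n + - (q * v n) * (1 - S \<omega>))"
            by (simp only: exp_le_cancel_iff)
          also have "\<dots> = exp (- v n) * exp (- (q * v n) * (1 - S \<omega>))" by (rule exp_add)
          finally have "exp (- (v n * S \<omega> powr (-q))) \<le> exp (- v n) * exp (- (q * v n) * (1 - S \<omega>))" .
          thus ?thesis using True sp by (simp add: fS_def frew[OF g True])
        next
          case False
          thus ?thesis by (simp add: fS_def)
        qed
      qed
    qed
    also have "\<dots> = exp (- v n) * I1 n" using L' by simp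
    finally show ?thesis .
  qed
  have lower: "exp (- v n) * (\<integral>t. indicator {0<..} t * exp (-t) * (if t \<le> q * c * v n * \<delta> then 1 else 0) * G (t / (q * c * v n)) \<partial>lborel) \<le> P n"
    if g: "good n" and d: "0 < \<delta>" "\<delta> < 1" and c: "c = (1 - \<delta>) powr (-(q+1))" for n \<delta> c
  proof -
    have c1: "c \<ge> 1"
    proof -
      have ce: "c = 1 / (1 - \<delta>) powr (q+1)" unfolding c by (rule powr_minus_divide)
      have p: "(1 - \<delta>) powr (q+1) \<le> 1" using d q_pos by (intro powr_le1) auto
      have p0: "(1 - \<delta>) powr (q+1) > 0" using d by simp
      show ?thesis unfolding ce using p p0 by (simp add: le_divide_eq)
    qed
    have lam: "q * c * v n > 0" using vpos[OF g] q_pos c1 by simp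
    define A where "A = {\<omega>\<in>space M. 1 - S \<omega> \<le> \<delta>}"
    have Am[measurable]: "A \<in> sets M" unfolding A_def by measurable
    have L: "(\<integral>\<omega>. exp (- (q * c * v n) * (1 - S \<omega>)) * indicator A \<omega> \<partial>M) =
         (\<integral>t. indicator {0<..} t * exp (-t) * measure M {\<omega>\<in>space M. (q * c * v n) * (1 - S \<omega>) < t \<and> \<omega> \<in> A} \<partial>lborel)"
      by (rule laplace_repr[where W="\<lambda>\<omega>. 1 - S \<omega>"]) (use W0 lam in auto)
    have "(\<integral>t. indicator {0<..} t * exp (-t) * (if t \<le> q * c * v n * \<delta> then 1 else 0) * G (t / (q * c * v n)) \<partial>lborel)
        \<le> (\<integral>t. indicator {0<..} t * exp (-t) * measure M {\<omega>\<in>space M. (q * c * v n) * (1 - S \<omega>) < t \<and> \<omega> \<in> A} \<partial>lborel)"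
    proof (rule integral_mono)
      show "integrable lborel (\<lambda>t. indicator {0<..} t * exp (-t) * (if t \<le> q * c * v n * \<delta> then 1 else 0) * G (t / (q * c * v n)))"
        using integrable_exp_ind_bounded[of "\<lambda>t. (if t \<le> q * c * v n * \<delta> then 1 else 0) * G (t / (q * c * v n))"]
        by (simp add: mult.assoc abs_mult G_le1 measure_nonneg G_def)
      show "integrable lborel (\<lambda>t. indicator {0<..} t * exp (-t) * measure M {\<omega>\<in>space M. (q * c * v n) * (1 - S \<omega>) < t \<and> \<omega> \<in> A})"
        by (rule integrable_exp_ind_bounded[OF mm[OF Am]]) auto
      fix t :: real
      show "indicator {0<..} t * exp (-t) * (if t \<le> q * c * v n * \<delta> then 1 else 0) * G (t / (q * c * v n))
            \<le> indicator {0<..} t * exp (-t) * measure M {\<omega>\<in>space M. (q * c * v n) * (1 - S \<omega>) < t \<and> \<omega> \<in> A}"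
      proof (cases "t \<le> q * c * v n * \<delta>")
        case True
        have "{\<omega>\<in>space M. (q * c * v n) * (1 - S \<omega>) < t \<and> \<omega> \<in> A} = {\<omega>\<in>space M. S \<omega> > 1 - t / (q * c * v n)}"
        proof -
          have "(q * c * v n) * (1 - s) < t \<longleftrightarrow> s > 1 - t / (q * c * v n)" for s
            by (rule lin_iff[OF lam])
          moreover have "(q * c * v n) * (1 - s) < t \<Longrightarrow> 1 - s \<le> \<delta>" for s
          proof -
            assume "(q * c * v n) * (1 - s) < t"
            hence "(q * c * v n) * (1 - s) < (q * c * v n) * \<delta>" using True by (simp add: mult.commute)
            thus ?thesis using lam mult_less_cancel_left_pos[of "q * c * v n" "1-s" \<delta>] by linarith
          qed
          ultimately show ?thesis unfolding A_def by auto
        qed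
        thus ?thesis using True by (simp add: G_def)
      next
        case False
        thus ?thesis by (simp add: indicator_def)
      qed
    qed
    also have "\<dots> = (\<integral>\<omega>. exp (- (q * c * v n) * (1 - S \<omega>)) * indicator A \<omega> \<partial>M)" using L by simp
    finally have I: "exp (- v n) * (\<integral>t. indicator {0<..} t * exp (-t) * (if t \<le> q * c * v n * \<delta> then 1 else 0) * G (t / (q * c * v n)) \<partial>lborel)
       \<le> exp (- v n) * (\<integral>\<omega>. exp (- (q * c * v n) * (1 - S \<omega>)) * indicator A \<omega> \<partial>M)"
      by (simp add: mult_left_mono)
    also have "\<dots> = (\<integral>\<omega>. exp (- v n) * (exp (- (q * c * v n) * (1 - S \<omega>)) * indicator A \<omega>) \<partial>M)" by simp
    also have "\<dots> \<le> (\<integral>\<omega>. fS n \<omega> \<partial>M)"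
    proof (rule integral_mono_AE[OF _ fSint[OF g]])
      show "integrable M (\<lambda>\<omega>. exp (- v n) * (exp (- (q * c * v n) * (1 - S \<omega>)) * indicator A \<omega>))"
        proof (rule integrable_const_bound[where B=1])
          show "AE \<omega> in M. norm (exp (- v n) * (exp (- (q * c * v n) * (1 - S \<omega>)) * indicator A \<omega>)) \<le> 1"
            using S01 by eventually_elim (rule exp_prod_le1, use vpos[OF g] lam in auto)
        qed measurable
      show "AE \<omega> in M. exp (- v n) * (exp (- (q * c * v n) * (1 - S \<omega>)) * indicator A \<omega>) \<le> fS n \<omega>"
        using S01 AE_space
      proof eventually_elim
        fix \<omega> assume s: "0 \<le> S \<omega> \<and> S \<omega> \<le> 1" and sp: "\<omega> \<in> space M"
        show "exp (- v n) * (exp (- (q * c * v n) * (1 - S \<omega>)) * indicator A \<omega>) \<le> fS n \<omega>"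
        proof (cases "\<omega> \<in> A")
          case True
          hence sd: "S \<omega> \<ge> 1 - \<delta>" unfolding A_def by auto
          hence spos: "S \<omega> > 0" using d by linarith
          have "S \<omega> powr (-(q+1)) \<le> c" unfolding c using sd d q_pos by (intro powr_mono2') auto
          hence "q * (1 - S \<omega>) * S \<omega> powr (-(q+1)) \<le> q * (1 - S \<omega>) * c"
            using s q_pos by (intro mult_left_mono) auto
          hence "S \<omega> powr (-q) \<le> 1 + q * (1 - S \<omega>) * c" using powr_neg_upper[OF q_pos spos] s by linarith
          hence "v n * S \<omega> powr (-q) \<le> v n * (1 + q * (1 - S \<omega>) * c)" using vpos[OF g] by (intro mult_left_mono) auto
          hence "- v n + - (q * c * v n) * (1 - S \<omega>) \<le> - (v n * S \<omega> powr (-q))"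
            by (simp add: algebra_simps)
          hence "exp (- v n + - (q * c * v n) * (1 - S \<omega>)) \<le> exp (- (v n * S \<omega> powr (-q)))"
            by (simp only: exp_le_cancel_iff)
          hence "exp (- v n) * exp (- (q * c * v n) * (1 - S \<omega>)) \<le> exp (- (v n * S \<omega> powr (-q)))"
            by (simp only: exp_add)
          thus ?thesis using True spos by (simp add: fS_def frew[OF g spos])
        next
          case False
          thus ?thesis by (simp add: fS_def)
        qed
      qed
    qed
    also have "\<dots> = P n" using Pn[OF g] by simp
    finally show ?thesis .
  qed
  have Gam: "Gamma (\<gamma>+1) > 0" using gamma_nonneg by (intro Gamma_real_pos) simp
  have Rpos: "R n > 0" if g: "good n" for n
    unfolding R_def using Gam G_pos[of "1 / (q * v n)"] vpos[OF g] q_pos by simp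
  have AB1: "(\<lambda>n. I1 n / G (1 / (q * v n))) \<longlonglongrightarrow> Gamma (\<gamma>+1)"
  proof -
    have "(\<lambda>n. (\<integral>t. indicator {0<..} t * exp (-t) * (\<lambda>n t. 1::real) n t * G (t / (q * v n)) \<partial>lborel) / G (1 / (q * v n)))
          \<longlonglongrightarrow> Gamma (\<gamma>+1)"
      by (rule abelian[where ch="\<lambda>n t. 1", OF Gmono G_le1 G_pos gamma_nonneg Greg qvlim]) auto
    thus ?thesis unfolding I1_def by simp
  qed
  have ev_up: "eventually (\<lambda>n. P n / R n < a') sequentially" if a': "a' > 1" for a'
  proof -
    have "(\<lambda>n. I1 n / G (1 / (q * v n)) / Gamma (\<gamma>+1)) \<longlonglongrightarrow> Gamma (\<gamma>+1) / Gamma (\<gamma>+1)"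
      by (intro tendsto_divide AB1 tendsto_const) (use Gam in simp)
    hence "(\<lambda>n. I1 n / G (1 / (q * v n)) / Gamma (\<gamma>+1)) \<longlonglongrightarrow> 1" using Gam by simp
    hence "eventually (\<lambda>n. I1 n / G (1 / (q * v n)) / Gamma (\<gamma>+1) < a') sequentially"
      using a' by (rule order_tendstoD(2))
    thus ?thesis using ev_good
    proof eventually_elim
      case (elim n)
      have g: "good n" by fact
      have Gp: "G (1 / (q * v n)) > 0" using G_pos[of "1 / (q * v n)"] vpos[OF g] q_pos by simp
      have "P n / R n \<le> (exp (- v n) * I1 n) / R n"
        using upper[OF g] Rpos[OF g] by (intro divide_right_mono) auto
      also have "\<dots> = I1 n / G (1 / (q * v n)) / Gamma (\<gamma>+1)"
        unfolding R_def using Gp Gam by (simp add: field_simps)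
      finally show ?case using elim by linarith
    qed
  qed
  have ev_low: "eventually (\<lambda>n. a' < P n / R n) sequentially"
    if d: "0 < \<delta>" "\<delta> < 1" and a': "a' < (1 - \<delta>) powr ((q+1)*\<gamma>)" for \<delta> a'
  proof -
    define c where "c = (1 - \<delta>) powr (-(q+1))"
    have ce: "c = 1 / (1 - \<delta>) powr (q+1)" unfolding c_def by (rule powr_minus_divide)
    have p0: "(1 - \<delta>) powr (q+1) > 0" using d by simp
    have cpos: "c > 0" unfolding ce using p0 by simp
    have cinv: "1 / c = (1 - \<delta>) powr (q+1)" unfolding ce by simp
    have qc: "q * c > 0" using q_pos cpos by simp
    have lamlim: "filterlim (\<lambda>n. q * c * v n) at_top sequentially"
      by (rule filterlim_tendsto_pos_mult_at_top[OF tendsto_const qc vlim])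
    define I2 where "I2 n = (\<integral>t. indicator {0<..} t * exp (-t) * (if t \<le> q * c * v n * \<delta> then 1 else 0) * G (t / (q * c * v n)) \<partial>lborel)" for n
    have AB2: "(\<lambda>n. I2 n / G (1 / (q * c * v n))) \<longlonglongrightarrow> Gamma (\<gamma>+1)"
      unfolding I2_def
    proof (rule abelian[where ch="\<lambda>n t. if t \<le> q * c * v n * \<delta> then 1 else 0", OF Gmono G_le1 G_pos gamma_nonneg Greg lamlim])
      show "(\<lambda>t. if t \<le> q * c * v n * \<delta> then 1 else 0 :: real) \<in> borel_measurable borel" for n
        by measurable
      show "0 \<le> (if t \<le> q * c * v n * \<delta> then 1 else 0 :: real) \<and> (if t \<le> q * c * v n * \<delta> then 1 else 0 :: real) \<le> 1" for n t
        by auto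
      show "(\<lambda>n. if t \<le> q * c * v n * \<delta> then 1 else 0 :: real) \<longlonglongrightarrow> 1" if t: "t > 0" for t
      proof (rule tendsto_eventually)
        have "filterlim (\<lambda>n. \<delta> * (q * c * v n)) at_top sequentially"
          by (rule filterlim_tendsto_pos_mult_at_top[OF tendsto_const d(1) lamlim])
        hence "eventually (\<lambda>n. t \<le> \<delta> * (q * c * v n)) sequentially" by (simp add: filterlim_at_top)
        thus "eventually (\<lambda>n. (if t \<le> q * c * v n * \<delta> then 1 else 0 :: real) = 1) sequentially"
          by (rule eventually_mono) (simp add: mult.commute)
      qed
    qed
    have RG: "(\<lambda>n. G (1 / (q * c * v n)) / G (1 / (q * v n))) \<longlonglongrightarrow> (1/c) powr \<gamma>"
    proof -
      have "1/c > 0" using cpos by simp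
      have "(\<lambda>n. G ((1/c) / (q * v n)) / G (1 / (q * v n))) \<longlonglongrightarrow> (1/c) powr \<gamma>"
        by (rule filterlim_compose[OF Greg[OF \<open>1/c > 0\<close>] qvlim])
      moreover have e: "q * c * v n = c * (q * v n)" for n by (simp add: algebra_simps)
      ultimately show ?thesis by (simp add: e)
    qed
    have lim: "(\<lambda>n. I2 n / G (1 / (q * c * v n)) / Gamma (\<gamma>+1) * (G (1 / (q * c * v n)) / G (1 / (q * v n))))
               \<longlonglongrightarrow> Gamma (\<gamma>+1) / Gamma (\<gamma>+1) * (1/c) powr \<gamma>"
      by (intro tendsto_intros AB2 RG) (use Gam in simp)
    have lv: "Gamma (\<gamma>+1) / Gamma (\<gamma>+1) * (1/c) powr \<gamma> = (1 - \<delta>) powr ((q+1)*\<gamma>)"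
      using Gam by (simp add: cinv powr_powr)
    have "eventually (\<lambda>n. a' < I2 n / G (1 / (q * c * v n)) / Gamma (\<gamma>+1) * (G (1 / (q * c * v n)) / G (1 / (q * v n)))) sequentially"
      by (rule order_tendstoD(1)[OF lim]) (use a' lv in simp)
    thus ?thesis using ev_good
    proof eventually_elim
      case (elim n)
      have g: "good n" by fact
      have Gp: "G (1 / (q * v n)) > 0" using G_pos[of "1 / (q * v n)"] vpos[OF g] q_pos by simp
      have Gp2: "G (1 / (q * c * v n)) > 0" using G_pos[of "1 / (q * c * v n)"] vpos[OF g] qc by simp
      have "I2 n / G (1 / (q * c * v n)) / Gamma (\<gamma>+1) * (G (1 / (q * c * v n)) / G (1 / (q * v n)))
            = (exp (- v n) * I2 n) / R n"
        unfolding R_def using Gp Gp2 Gam by (simp add: field_simps)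
      also have "\<dots> \<le> P n / R n"
        using lower[OF g d c_def] Rpos[OF g] unfolding I2_def by (intro divide_right_mono) auto
      finally show ?case using elim by linarith
    qed
  qed
  have ev_low': "eventually (\<lambda>n. a' < P n / R n) sequentially" if a': "a' < 1" for a'
  proof -
    have lim1: "((\<lambda>d. (1-d) powr ((q+1)*\<gamma>)) \<longlongrightarrow> 1) (at_right (0::real))"
    proof -
      have "((\<lambda>d. (1-d) powr ((q+1)*\<gamma>)) \<longlongrightarrow> (1-0) powr ((q+1)*\<gamma>)) (at_right (0::real))"
        by (intro tendsto_intros) auto
      thus ?thesis by simp
    qed
    have "eventually (\<lambda>d. a' < (1-d) powr ((q+1)*\<gamma>)) (at_right 0)"
      by (rule order_tendstoD(1)[OF lim1 a'])
    then obtain b where b: "b > 0" "\<And>y. 0 < y \<Longrightarrow> y < b \<Longrightarrow> a' < (1-y) powr ((q+1)*\<gamma>)"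
      by (auto simp: eventually_at_right_field)
    define \<delta> where "\<delta> = min (b/2) (1/2)"
    have "0 < \<delta>" "\<delta> < 1" "\<delta> < b" using b by (auto simp: \<delta>_def)
    thus ?thesis using ev_low b(2) by blast
  qed
  have "(\<lambda>n. P n / R n) \<longlonglongrightarrow> 1"
    by (rule order_tendstoI) (use ev_low' ev_up in auto)
  hence "(\<lambda>n. P n) \<sim>[sequentially] R" by (rule asymp_equivI')
  thus ?thesis unfolding Rform unfolding P_def .
qed

end
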